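(* Let $\Gamma\subseteq\mathbb{Z}^d$ be a finite set. Then for every $x\in\Gamma$, $$\Phi_\Gamma(x)=\sum_{e\in\mathbb{Z}^d,|e|=1}\frac1{2d}\exp(e)\otimes\Phi_\Gamma(x+e),$$ and consequently for every $n\ge2$: (a) $\displaystyle\Delta\rho_n(\Phi_\Gamma(x))=-\sum_{|e|=1}\frac1{2d}\sum_{i=1}^n\frac{e^{\otimes i}}{i!}\otimes\rho_{n-i}(\Phi_\Gamma(x+e))$ for $x\in\Gamma$; (b) $\rho_n(\Phi_\Gamma(x))=0$ for $x\in\partial\Gamma$; and $\rho_0(\Phi_\Gamma(x))=1$, $\rho_1(\Phi_\Gamma(x))=0$ for every $x\in\bar\Gamma$.
   Context: Let $(S_k)_{k\ge0}$ be the simple random walk on $\mathbb{Z}^d$ started at $S_0=x$ (under $\mathbb{E}^x$), with i.i.d. increments uniformly distributed on the $2d$ unit vectors $e\in\mathbb{Z}^d$, $|e|=1$. $\partial\Gamma=\{y\in\mathbb{Z}^d\setminus\Gamma: |y-w|=1\text{ for some }w\in\Gamma\}$, $\bar\Gamma=\Gamma\cup\partial\Gamma$, and $\tau=\tau_\Gamma=\min\{k\ge0:S_k\notin\Gamma\}$. $T((\mathbb{R}^d))$ is the algebra of formal tensor series $\mathbf a=(a_0,a_1,\dots)$, $a_n\in(\mathbb{R}^d)^{\otimes n}$, with $(\mathbf a\otimes\mathbf b)_n=\sum_{k=0}^na_k\otimes b_{n-k}$ and $\rho_n(\mathbf a)=a_n$; for $v\in\mathbb{R}^d$, $\exp(v)=\sum_{i\ge0}v^{\otimes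 i}/i!$ (the signature of the straight segment with increment $v$). $\Phi_\Gamma(x)$ is the expectation (coordinatewise) of the signature of the piecewise linear path through $S_0,S_1,\dots,S_\tau$, i.e. $\Phi_\Gamma(x)=\mathbb{E}^x[\exp(S_1-S_0)\otimes\cdots\otimes\exp(S_\tau-S_{\tau-1})]$ (equal to $\mathbf 1=(1,0,0,\dots)$ if $\tau=0$). The discrete Laplacian is $\Delta f(x)=\frac1{2d}\sum_{|e|=1}f(x+e)-f(x)$. *)

theory Defs
  imports "HOL-Probability.Probability"
begin

text \<open>The dimension d is CARD('d) for a finite index type 'd;
  lattice points of Z^d are vectors int^'d.  A formal tensor series
  a = (a_0, a_1, ...) in T((R^d)) is represented by its coordinates: the value at
  a word w = [i_1,...,i_n] of indices is the (i_1,...,i_n) component of a_n.\<close>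

type_synonym 'd tseries = "'d list \<Rightarrow> real"

definition tone :: "'d tseries" where
  "tone = (\<lambda>w. if w = [] then 1 else 0)"

definition tzero :: "'d tseries" where
  "tzero = (\<lambda>w. 0)"

definition tmul :: "'d tseries \<Rightarrow> 'd tseries \<Rightarrow> 'd tseries" where
  "tmul a b = (\<lambda>w. \<Sum>k\<le>length w. a (take k w) * b (drop k w))"

definition rho :: "nat \<Rightarrow> 'd tseries \<Rightarrow> 'd tseries" where
  "rho n a = (\<lambda>w. if length w = n then a w else 0)"

definition tpow :: "real^'d \<Rightarrow> nat \<Rightarrow> 'd tseries" where
  "tpow v i = (\<lambda>w. if length w = i then (\<Prod>j<length w. v $ (w ! j)) else 0)"

definition tscale :: "real \<Rightarrow> 'd tseries \<Rightarrow> 'd tseries" where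
  "tscale c a = (\<lambda>w. c * a w)"

text \<open>exp(v) = sum_i v^{\<otimes> i}/i! (degree-wise; each coordinate has one nonzero term).\<close>
definition texp :: "real^'d \<Rightarrow> 'd tseries" where
  "texp v = (\<lambda>w. tpow v (length w) w / fact (length w))"

definition rvec :: "int^'d \<Rightarrow> real^'d" where
  "rvec e = (\<chi> i. real_of_int (e $ i))"

definition unit_steps :: "(int^'d) set" where
  "unit_steps = {e. (\<Sum>i\<in>UNIV. (e $ i)^2) = 1}"

definition lattice_boundary :: "(int^'d) set \<Rightarrow> (int^'d) set" where
  "lattice_boundary \<Gamma> = {y. y \<notin> \<Gamma> \<and> (\<exists>w\<in>\<Gamma>. y - w \<in> unit_steps)}"

definition lattice_closure :: "(int^'d) set \<Rightarrow> (int^'d) set" where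
  "lattice_closure \<Gamma> = \<Gamma> \<union> lattice_boundary \<Gamma>"

definition dlap :: "(int^'d \<Rightarrow> real) \<Rightarrow> int^'d \<Rightarrow> real" where
  "dlap f x = (1 / (2 * real CARD('d))) * (\<Sum>e\<in>unit_steps. f (x + e)) - f x"

text \<open>Simple random walk: probability space of i.i.d. increment streams,
  each increment uniform on the 2d unit vectors.\<close>
definition srw :: "(int^'d) stream measure" where
  "srw = stream_space (measure_pmf (pmf_of_set unit_steps))"

definition walk :: "int^'d \<Rightarrow> (int^'d) stream \<Rightarrow> nat \<Rightarrow> int^'d" where
  "walk x \<omega> k = x + (\<Sum>i<k. \<omega> !! i)"

text \<open>Exit time tau = min{k \<ge> 0 : S_k \<notin> \<Gamma>} (a.s. finite when \<Gamma> is finite).\<close>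
definition exit_time :: "(int^'d) set \<Rightarrow> int^'d \<Rightarrow> (int^'d) stream \<Rightarrow> nat" where
  "exit_time \<Gamma> x \<omega> = (LEAST k. walk x \<omega> k \<notin> \<Gamma>)"

text \<open>Signature of the piecewise linear path with increments u_1,...,u_m:
  exp(u_1) \<otimes> ... \<otimes> exp(u_m)  (equal to 1 for m = 0).\<close>
definition path_sig :: "(int^'d) list \<Rightarrow> 'd tseries" where
  "path_sig us = foldr (\<lambda>u a. tmul (texp (rvec u)) a) us tone"

definition Phi :: "(int^'d) set \<Rightarrow> int^'d \<Rightarrow> 'd tseries" where
  "Phi \<Gamma> x = (\<lambda>w. integral\<^sup>L srw (\<lambda>\<omega>. path_sig (stake (exit_time \<Gamma> x \<omega>) \<omega>) w))"

end

theory Submission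
  imports Defs
begin

lemma unit_steps_iff:
  "(e::int^'d) \<in> unit_steps \<longleftrightarrow> (\<exists>i. e = axis i 1 \<or> e = axis i (-1))"
proof
  assume e: "e \<in> unit_steps"
  hence s: "(\<Sum>i\<in>UNIV. (e $ i)^2) = 1" by (simp add: unit_steps_def)
  have "\<exists>i. e $ i \<noteq> 0"
  proof (rule ccontr)
    assume "\<not> ?thesis" hence "\<forall>i. e $ i = 0" by auto
    with s show False by simp
  qed
  then obtain i where i: "e $ i \<noteq> 0" by auto
  have sq: "(e $ i)^2 \<ge> 1" using i
    by (smt (verit) mult_le_cancel_right1 power2_eq_square zero_less_mult_iff)
  have split: "(\<Sum>j\<in>UNIV. (e $ j)^2) = (e $ i)^2 + (\<Sum>j\<in>UNIV-{i}. (e $ j)^2)"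
    by (simp add: sum.remove)
  have nn: "(\<Sum>j\<in>UNIV-{i}. (e $ j)^2) \<ge> 0" by (intro sum_nonneg) auto
  have ei: "(e $ i)^2 = 1" and rest: "(\<Sum>j\<in>UNIV-{i}. (e $ j)^2) = 0"
    using s split nn sq by linarith+
  have others: "\<forall>j\<in>UNIV-{i}. (e $ j)^2 = 0"
    using rest by (subst (asm) sum_nonneg_eq_0_iff) auto
  have "e $ i = 1 \<or> e $ i = -1" using ei
    by (metis power2_eq_1_iff)
  moreover have "\<And>j. j \<noteq> i \<Longrightarrow> e $ j = 0" using others by auto
  ultimately show "\<exists>i. e = axis i 1 \<or> e = axis i (-1)"
    by (intro exI[of _ i]) (auto simp: vec_eq_iff axis_def)
next
  assume "\<exists>i. e = axis i 1 \<or> e = axis i (-1)"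
  then obtain i where "e = axis i 1 \<or> e = axis i (-1)" by auto
  then show "e \<in> unit_steps"
    by (auto simp: unit_steps_def axis_def power2_eq_square if_distrib[of "\<lambda>x. x * x"] sum.delta cong: if_cong)
qed

lemma unit_steps_image:
  "(unit_steps :: (int^'d) set) = (\<lambda>(i,s). axis i s) ` (UNIV \<times> {1, -1})"
  by (auto simp: unit_steps_iff image_iff)

lemma unit_steps_finite[simp]: "finite (unit_steps :: (int^'d) set)"
  by (simp add: unit_steps_image)

lemma unit_steps_card: "card (unit_steps :: (int^'d) set) = 2 * CARD('d)"
proof -
  have inj: "inj_on (\<lambda>(i::'d,s::int). axis i s) (UNIV \<times> {1, -1})"
    by (auto simp: inj_on_def axis_eq_axis)
  have "card (unit_steps :: (int^'d) set) = card ((UNIV::'d set) \<times> ({1, -1}::int set))"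
    unfolding unit_steps_image by (rule card_image[OF inj])
  also have "\<dots> = CARD('d) * 2" by (simp add: card_cartesian_product)
  finally show ?thesis by simp
qed

lemma unit_steps_ne[simp]: "(unit_steps :: (int^'d) set) \<noteq> {}"
  using unit_steps_card[where 'd='d] by auto

lemma unit_steps_uminus: "e \<in> unit_steps \<Longrightarrow> - e \<in> unit_steps"
  by (simp add: unit_steps_def)

lemma unit_steps_coord: "e \<in> unit_steps \<Longrightarrow> \<bar>e $ i\<bar> \<le> 1"
  by (auto simp: unit_steps_iff axis_def)

abbreviation "UM \<equiv> measure_pmf (pmf_of_set (unit_steps :: (int^'d) set))"

lemma space_UM[simp]: "space (UM :: (int^'d) measure) = UNIV" by simp
lemma sets_UM[simp]: "sets (UM :: (int^'d) measure) = UNIV" by simp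

lemma space_srw[simp]: "space (srw :: (int^'d) stream measure) = UNIV"
  by (simp add: srw_def space_stream_space)

lemma prob_space_srw: "prob_space (srw :: (int^'d) stream measure)"
  unfolding srw_def by (rule prob_space.prob_space_stream_space) (rule prob_space_measure_pmf)

lemma srw_Stream_measurable[measurable]:
  "(\<lambda>(x,X). x ## X) \<in> measurable ((UM :: (int^'d) measure) \<Otimes>\<^sub>M srw) srw"
  unfolding srw_def by measurable

lemma srw_eq_distr:
  "(srw :: (int^'d) stream measure) = distr (UM \<Otimes>\<^sub>M srw) srw (\<lambda>(x,X). x ## X)"
proof (rule measure_eqI)
  show "sets srw = sets (distr (UM \<Otimes>\<^sub>M srw) srw (\<lambda>(x,X). x ## X))" by simp
next
  fix A :: "(int^'d) stream set" assume A: "A \<in> sets srw"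
  interpret S: prob_space "srw :: (int^'d) stream measure" by (rule prob_space_srw)
  have A': "A \<in> sets (stream_space UM)" using A by (simp add: srw_def)
  have "emeasure (distr (UM \<Otimes>\<^sub>M srw) srw (\<lambda>(x,X). x ## X)) A =
      emeasure (UM \<Otimes>\<^sub>M srw) ((\<lambda>(x,X). x ## X) -` A \<inter> space (UM \<Otimes>\<^sub>M srw))"
    using A by (simp add: emeasure_distr)
  also have "\<dots> = (\<integral>\<^sup>+x. emeasure srw (Pair x -` ((\<lambda>(x,X). x ## X) -` A \<inter> space (UM \<Otimes>\<^sub>M srw))) \<partial>UM)"
    using A by (intro S.emeasure_pair_measure_alt) measurable
  also have "\<dots> = (\<integral>\<^sup>+t. emeasure srw {x\<in>space srw. t ## x \<in> A } \<partial>UM)"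
    by (intro nn_integral_cong arg_cong2[where f=emeasure]) (auto simp: space_pair_measure)
  also have "\<dots> = emeasure srw A"
    using prob_space.emeasure_stream_space[OF prob_space_measure_pmf A'] by (simp add: srw_def)
  finally show "emeasure srw A = emeasure (distr (UM \<Otimes>\<^sub>M srw) srw (\<lambda>(x,X). x ## X)) A" ..
qed

lemma srw_integral_decomp:
  fixes f :: "(int^'d) stream \<Rightarrow> real"
  assumes f: "integrable srw f"
  shows "integral\<^sup>L srw f = (\<Sum>e\<in>unit_steps. integral\<^sup>L srw (\<lambda>X. f (e ## X))) / card (unit_steps :: (int^'d) set)"
proof -
  interpret S: prob_space "srw :: (int^'d) stream measure" by (rule prob_space_srw)
  interpret P: pair_sigma_finite "UM :: (int^'d) measure" "srw :: (int^'d) stream measure"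
    unfolding pair_sigma_finite_def
    by (simp add: S.sigma_finite_measure_axioms measure_pmf.sigma_finite_measure_axioms)
  have fm[measurable]: "f \<in> borel_measurable srw" using f by auto
  have "integral\<^sup>L srw f = integral\<^sup>L (distr (UM \<Otimes>\<^sub>M srw) srw (\<lambda>(x,X). x ## X)) f"
    by (subst srw_eq_distr) simp
  also have "\<dots> = integral\<^sup>L (UM \<Otimes>\<^sub>M srw) (\<lambda>z. f ((\<lambda>(x,X). x ## X) z))"
    by (rule integral_distr) measurable
  also have "\<dots> = (\<integral>x. (\<integral>X. f (x ## X) \<partial>srw) \<partial>UM)"
  proof (subst P.integral_fst'[symmetric])
    have "integrable (distr (UM \<Otimes>\<^sub>M srw) srw (\<lambda>(x,X). x ## X)) f"
      using f by (subst (asm) srw_eq_distr) 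
    then show "integrable (UM \<Otimes>\<^sub>M srw) (\<lambda>z. f ((\<lambda>(x,X). x ## X) z))"
      by (subst (asm) integrable_distr_eq) measurable
  qed (simp add: case_prod_beta)
  also have "\<dots> = (\<Sum>e\<in>unit_steps. integral\<^sup>L srw (\<lambda>X. f (e ## X))) / card (unit_steps :: (int^'d) set)"
    by (rule integral_pmf_of_set) simp_all
  finally show ?thesis .
qed

lemma sets_srw: "sets (srw :: (int^'d) stream measure) = sets (stream_space (count_space UNIV))"
  unfolding srw_def by (rule sets_stream_space_cong) simp

lemma stake_srw_meas[measurable]:
  "stake k \<in> measurable (srw :: (int^'d) stream measure) (count_space UNIV)"
  using measurable_stake[where 'a="int^'d"] by (simp add: measurable_cong_sets[OF sets_srw refl])

lemma stake_fun_meas: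
  "(\<lambda>\<omega>. g (stake k \<omega>)) \<in> measurable (srw :: (int^'d) stream measure) N" if "\<And>l. g l \<in> space N"
  by (rule measurable_compose[OF stake_srw_meas]) (simp add: measurable_count_space_eq1 that)

lemma walk_stake: "walk x \<omega> k = x + sum_list (stake k \<omega>)"
proof -
  have "(\<Sum>i<k. \<omega> !! i) = sum_list (stake k \<omega>)" for \<omega>
  proof (induction k arbitrary: \<omega>)
    case (Suc k)
    have "(\<Sum>i<Suc k. \<omega> !! i) = \<omega> !! 0 + (\<Sum>i<k. stl \<omega> !! i)"
      by (subst sum.lessThan_Suc_shift) simp
    then show ?case using Suc[of "stl \<omega>"] by simp
  qed simp
  thus ?thesis by (simp add: walk_def)
qed

lemma walk_0[simp]: "walk x \<omega> 0 = x" by (simp add: walk_def)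

lemma walk_Stream_Suc[simp]: "walk x (e ## X) (Suc k) = walk (x + e) X k"
  by (simp add: walk_stake)

lemma walk_meas[measurable]:
  "(\<lambda>\<omega>. walk x \<omega> k) \<in> measurable (srw :: (int^'d) stream measure) (count_space UNIV)"
  unfolding walk_stake by (rule stake_fun_meas) simp

lemma exit_time_meas[measurable]:
  "exit_time \<Gamma> x \<in> measurable (srw :: (int^'d) stream measure) (count_space UNIV)"
proof -
  have "(\<lambda>\<omega>. LEAST k. walk x \<omega> k \<notin> \<Gamma>) \<in> measurable (srw :: (int^'d) stream measure) (count_space UNIV)"
    by (rule measurable_Least) (rule stake_fun_meas[of "\<lambda>l. x + sum_list l \<notin> \<Gamma>", unfolded walk_stake[symmetric]], simp)
  thus ?thesis unfolding exit_time_def[abs_def] .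
qed

lemma sig_meas[measurable]:
  "(\<lambda>\<omega>. path_sig (stake (exit_time \<Gamma> x \<omega>) \<omega>) w) \<in> borel_measurable (srw :: (int^'d) stream measure)"
  by (rule measurable_compose_countable[where g="exit_time \<Gamma> x"]) (auto intro: stake_fun_meas)

definition stay :: "(int^'d) set \<Rightarrow> int^'d \<Rightarrow> nat \<Rightarrow> (int^'d) stream \<Rightarrow> bool" where
  "stay \<Gamma> x m \<omega> \<longleftrightarrow> (\<forall>k\<le>m. walk x \<omega> k \<in> \<Gamma>)"

definition pst :: "(int^'d) set \<Rightarrow> nat \<Rightarrow> int^'d \<Rightarrow> real" where
  "pst \<Gamma> m x = measure srw {\<omega>. stay \<Gamma> x m \<omega>}"

lemma stay_sets[measurable]: "{\<omega>. stay \<Gamma> x m \<omega>} \<in> sets (srw :: (int^'d) stream measure)"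
proof -
  have "{\<omega>. stay \<Gamma> x m \<omega>} = (\<Inter>k\<in>{..m}. (\<lambda>\<omega>. walk x \<omega> k) -` \<Gamma> \<inter> space srw)"
    by (auto simp: stay_def)
  also have "\<dots> \<in> sets (srw :: (int^'d) stream measure)"
    by (intro sets.finite_INT measurable_sets[OF walk_meas]) auto
  finally show ?thesis .
qed

lemma stay_Suc_Stream: "stay \<Gamma> x (Suc m) (e ## X) \<longleftrightarrow> x \<in> \<Gamma> \<and> stay \<Gamma> (x + e) m X"
proof -
  have "stay \<Gamma> x (Suc m) (e ## X) \<longleftrightarrow> (walk x (e##X) 0 \<in> \<Gamma> \<and> (\<forall>k\<le>m. walk x (e##X) (Suc k) \<in> \<Gamma>))"
    unfolding stay_def by (metis Suc_le_mono le0 not0_implies_Suc)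
  thus ?thesis by (simp add: stay_def)
qed

lemma stay_0: "stay \<Gamma> x 0 \<omega> \<longleftrightarrow> x \<in> \<Gamma>" by (simp add: stay_def)

lemma stay_mono: "stay \<Gamma> x (m + k) \<omega> \<Longrightarrow> stay \<Gamma> x m \<omega>" by (simp add: stay_def)

lemma pst_nonneg: "0 \<le> pst \<Gamma> m x" by (simp add: pst_def)

lemma pst_le1: "pst \<Gamma> m x \<le> 1"
proof -
  interpret S: prob_space "srw :: (int^'d) stream measure" by (rule prob_space_srw)
  show ?thesis unfolding pst_def by (rule S.prob_le_1)
qed

lemma pst_out: "x \<notin> \<Gamma> \<Longrightarrow> pst \<Gamma> m x = 0"
proof -
  assume "x \<notin> \<Gamma>"
  hence "{\<omega>. stay \<Gamma> x m \<omega>} = {}" by (auto simp: stay_def dest: spec[of _ 0])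
  thus ?thesis by (simp add: pst_def)
qed

lemma pst_mono: "pst \<Gamma> (m + k) x \<le> pst \<Gamma> m x"
proof -
  interpret S: prob_space "srw :: (int^'d) stream measure" by (rule prob_space_srw)
  show ?thesis unfolding pst_def
    by (intro S.finite_measure_mono) (auto intro: stay_mono)
qed

lemma pst_Suc: "(x::int^'d) \<in> \<Gamma> \<Longrightarrow>
  pst \<Gamma> (Suc m) x = (\<Sum>e\<in>unit_steps. pst \<Gamma> m (x + e)) / card (unit_steps :: (int^'d) set)"
proof -
  assume x: "x \<in> \<Gamma>"
  interpret S: prob_space "srw :: (int^'d) stream measure" by (rule prob_space_srw)
  have eq: "pst \<Gamma> k y = integral\<^sup>L srw (indicator {\<omega>. stay \<Gamma> y k \<omega>})" for k y
    by (simp add: pst_def)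
  have "pst \<Gamma> (Suc m) x = (\<Sum>e\<in>unit_steps. integral\<^sup>L srw (\<lambda>X. indicator {\<omega>. stay \<Gamma> x (Suc m) \<omega>} (e ## X) :: real))
      / card (unit_steps :: (int^'d) set)"
  proof -
    have int: "integrable srw (indicator {\<omega>. stay \<Gamma> x (Suc m) \<omega>} :: _ \<Rightarrow> real)"
      by (rule integrable_real_indicator) (simp_all add: less_top[symmetric] S.emeasure_finite)
    show ?thesis
      unfolding eq using srw_integral_decomp[OF int] by simp
  qed
  also have "\<dots> = (\<Sum>e\<in>unit_steps. pst \<Gamma> m (x + e)) / card (unit_steps :: (int^'d) set)"
    unfolding eq using x
    by (intro arg_cong2[where f="(/)"] sum.cong refl Bochner_Integration.integral_cong)
       (auto simp: stay_Suc_Stream indicator_def)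
  finally show ?thesis .
qed

lemma card_unit_pos: "real (card (unit_steps :: (int^'d) set)) \<ge> 2"
  using unit_steps_card[where 'd='d] by simp

lemma pst_H:
  fixes x :: "int^'d"
  assumes u0: "u0 \<in> unit_steps" and c: "\<forall>y. pst \<Gamma> m y \<le> c"
  shows "(\<exists>s'\<le>s. x + of_nat s' *s u0 \<notin> \<Gamma>) \<Longrightarrow>
     pst \<Gamma> (m + s) x \<le> c * (1 - (1 / real (card (unit_steps::(int^'d) set)))^s)"
proof (induction s arbitrary: x)
  define N where "N = real (card (unit_steps::(int^'d) set))"
  have N2: "N \<ge> 2" unfolding N_def by (rule card_unit_pos)
  have c0: "c \<ge> 0" using c pst_nonneg[of \<Gamma> m] by (meson order_trans)
  {
    case 0
    then have "x \<notin> \<Gamma>" by (auto simp: vec_eq_iff)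
    then show ?case by (simp add: pst_out)
  next
    case (Suc s)
    show ?case
    proof (cases "x \<in> \<Gamma>")
      case False
      have "(1 / N)^Suc s \<le> 1" using N2 by (intro power_le_one) auto
      then show ?thesis using False c0 by (simp add: pst_out N_def[symmetric])
    next
      case True
      from Suc.prems obtain s' where s': "s' \<le> Suc s" "x + of_nat s' *s u0 \<notin> \<Gamma>" by auto
      have "s' \<noteq> 0"
      proof
        assume "s' = 0" hence "x + of_nat s' *s u0 = x" by (simp add: vec_eq_iff)
        with s' True show False by simp
      qed
      then obtain s'' where s'': "s' = Suc s''" using not0_implies_Suc by blast
      have "(x + u0) + of_nat s'' *s u0 = x + of_nat s' *s u0"
        by (simp add: s'' vec_eq_iff algebra_simps)
      then have IH: "pst \<Gamma> (m + s) (x + u0) \<le> c * (1 - (1 / N)^s)"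
        using Suc.IH[of "x + u0"] s' s'' unfolding N_def by (metis Suc_le_mono)
      have le: "pst \<Gamma> (m + s) y \<le> c" for y using pst_mono[of \<Gamma> m s y] c by (meson order_trans)
      have fin: "finite (unit_steps :: (int^'d) set)" by simp
      have "(\<Sum>e\<in>unit_steps. pst \<Gamma> (m + s) (x + e)) =
          pst \<Gamma> (m + s) (x + u0) + (\<Sum>e\<in>unit_steps - {u0}. pst \<Gamma> (m + s) (x + e))"
        using u0 fin by (simp add: sum.remove)
      also have "\<dots> \<le> c * (1 - (1 / N)^s) + (\<Sum>e\<in>unit_steps - {u0}. c)"
        using IH le by (intro add_mono sum_mono) auto
      also have "\<dots> = c * (1 - (1 / N)^s) + (N - 1) * c"
        using u0 fin card_unit_pos[where 'd='d] by (simp add: N_def of_nat_diff)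
      finally have S: "(\<Sum>e\<in>unit_steps. pst \<Gamma> (m + s) (x + e)) \<le> c * (1 - (1 / N)^s) + (N - 1) * c" .
      have "pst \<Gamma> (m + Suc s) x = (\<Sum>e\<in>unit_steps. pst \<Gamma> (m + s) (x + e)) / N"
        using pst_Suc[OF True, of "m + s"] by (simp add: N_def)
      also have "\<dots> \<le> (c * (1 - (1 / N)^s) + (N - 1) * c) / N"
        using S N2 by (intro divide_right_mono) auto
      also have "\<dots> = c * (1 - (1 / N)^Suc s)"
        using N2 by (simp add: field_simps)
      finally show ?thesis unfolding N_def .
    qed
  }
qed

lemma exit_line:
  fixes x :: "int^'d"
  assumes fin: "finite \<Gamma>"
  shows "\<exists>s'\<le>card \<Gamma>. x + of_nat s' *s axis i 1 \<notin> \<Gamma>"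
proof (rule ccontr)
  assume "\<not> ?thesis"
  hence sub: "(\<lambda>s'. x + of_nat s' *s axis i 1) ` {0..card \<Gamma>} \<subseteq> \<Gamma>" by auto
  have inj: "inj_on (\<lambda>s'::nat. x + of_nat s' *s axis i (1::int)) {0..card \<Gamma>}"
  proof (rule inj_onI)
    fix a b :: nat assume "x + of_nat a *s axis i 1 = x + of_nat b *s axis i (1::int)"
    hence "(x + of_nat a *s axis i 1) $ i = (x + of_nat b *s axis i (1::int)) $ i" by simp
    thus "a = b" by (simp add: axis_def)
  qed
  have "card {0..card \<Gamma>} \<le> card \<Gamma>"
    using card_inj_on_le[OF inj sub fin] .
  thus False by simp
qed

lemma axis_unit: "axis i (1::int) \<in> unit_steps"
  by (auto simp: unit_steps_iff)

definition qq :: "(int^'d) set \<Rightarrow> real" where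
  "qq \<Gamma> = (1 / real (card (unit_steps::(int^'d) set))) ^ (card \<Gamma> + 1)"

lemma qq_bounds: "0 < qq (\<Gamma>::(int^'d) set)" "qq \<Gamma> < 1"
proof -
  have N2: "real (card (unit_steps::(int^'d) set)) \<ge> 2" by (rule card_unit_pos)
  show "0 < qq \<Gamma>" using N2 by (simp add: qq_def)
  have "(1 / real (card (unit_steps::(int^'d) set))) ^ (card \<Gamma> + 1) < 1"
    using N2 by (subst power_less_one_iff) auto
  thus "qq \<Gamma> < 1" by (simp add: qq_def)
qed

lemma pst_block:
  fixes \<Gamma> :: "(int^'d) set"
  assumes fin: "finite \<Gamma>" and c: "\<forall>y. pst \<Gamma> m y \<le> c"
  shows "pst \<Gamma> (m + (card \<Gamma> + 1)) x \<le> c * (1 - qq \<Gamma>)"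
proof -
  obtain i :: 'd where True by simp
  from exit_line[OF fin, of x i] obtain s' where "s' \<le> card \<Gamma>" "x + of_nat s' *s axis i 1 \<notin> \<Gamma>" by auto
  hence "\<exists>s'\<le>card \<Gamma> + 1. x + of_nat s' *s axis i 1 \<notin> \<Gamma>" by (intro exI[of _ s']) auto
  from pst_H[OF axis_unit c this] show ?thesis by (simp add: qq_def)
qed

lemma pst_geom:
  fixes \<Gamma> :: "(int^'d) set"
  assumes fin: "finite \<Gamma>"
  shows "pst \<Gamma> (j * (card \<Gamma> + 1)) x \<le> (1 - qq \<Gamma>) ^ j"
proof (induction j arbitrary: x)
  case 0 then show ?case using pst_le1 by simp
next
  case (Suc j)
  have "pst \<Gamma> (j * (card \<Gamma> + 1) + (card \<Gamma> + 1)) x \<le> (1 - qq \<Gamma>) ^ j * (1 - qq \<Gamma>)"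
    by (rule pst_block[OF fin]) (use Suc.IH in auto)
  thus ?case by (simp add: algebra_simps)
qed

lemma pst_bound:
  fixes \<Gamma> :: "(int^'d) set"
  assumes fin: "finite \<Gamma>"
  shows "pst \<Gamma> m x \<le> (1 - qq \<Gamma>) ^ (m div (card \<Gamma> + 1))"
proof -
  have m: "m = (m div (card \<Gamma> + 1)) * (card \<Gamma> + 1) + m mod (card \<Gamma> + 1)" by (rule div_mult_mod_eq[symmetric])
  have "pst \<Gamma> m x \<le> pst \<Gamma> ((m div (card \<Gamma> + 1)) * (card \<Gamma> + 1)) x"
    by (subst m) (rule pst_mono)
  also have "\<dots> \<le> (1 - qq \<Gamma>) ^ (m div (card \<Gamma> + 1))" by (rule pst_geom[OF fin])
  finally show ?thesis .
qed

lemma exit_tail_sub: "{\<omega>. Suc m \<le> exit_time \<Gamma> x \<omega>} \<subseteq> {\<omega>. stay \<Gamma> x m \<omega>}"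
proof safe
  fix \<omega> assume h: "Suc m \<le> exit_time \<Gamma> x \<omega>"
  show "stay \<Gamma> x m \<omega>" unfolding stay_def
  proof (intro allI impI, rule ccontr)
    fix k assume "k \<le> m" "walk x \<omega> k \<notin> \<Gamma>"
    hence "exit_time \<Gamma> x \<omega> \<le> k" unfolding exit_time_def by (intro Least_le) simp
    with h \<open>k \<le> m\<close> show False by simp
  qed
qed

lemma exit_tail:
  fixes \<Gamma> :: "(int^'d) set"
  assumes fin: "finite \<Gamma>"
  shows "\<exists>C \<theta>. 0 \<le> \<theta> \<and> \<theta> < 1 \<and> 0 \<le> C \<and>
     (\<forall>m x. measure srw {\<omega>. m \<le> exit_time \<Gamma> x \<omega>} \<le> C * \<theta> ^ m)"
proof -
  interpret S: prob_space "srw :: (int^'d) stream measure" by (rule prob_space_srw)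
  define L where "L = card \<Gamma> + 1"
  define r where "r = 1 - qq \<Gamma>"
  have r: "0 < r" "r < 1" using qq_bounds[of \<Gamma>] by (auto simp: r_def)
  define \<theta> where "\<theta> = r powr (1 / real L)"
  have L: "L \<ge> 1" by (simp add: L_def)
  have th: "0 < \<theta>" "\<theta> < 1" using r L powr_less_mono2[of "1/real L" r 1] unfolding \<theta>_def by auto
  define C where "C = 1 / (\<theta> * r)"
  have C: "0 \<le> C" using th r by (simp add: C_def)
  have key: "r ^ (m div L) \<le> \<theta> ^ m / r" for m
  proof -
    have "real m / real L \<le> real (m div L) + 1"
    proof -
      have "m < (m div L + 1) * L"
      proof -
        have e1: "m div L * L + m mod L = m" by (rule div_mult_mod_eq)
        have e2: "m mod L < L" using L by simp
        have e3: "(m div L + 1) * L = m div L * L + L" by simp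
        show ?thesis using e1 e2 e3 by linarith
      qed
      hence "real m < real ((m div L + 1) * L)" by (simp only: of_nat_less_iff)
      hence "real m < (real (m div L) + 1) * real L" by (simp add: algebra_simps)
      thus ?thesis using L by (simp add: divide_simps)
    qed
    hence "r powr (real (m div L) + 1) \<le> r powr (real m / real L)"
      using r by (intro powr_mono') auto
    moreover have "r powr (real (m div L) + 1) = r ^ (m div L) * r"
      using r by (simp add: powr_add powr_realpow)
    moreover have "r powr (real m / real L) = \<theta> ^ m"
      using r unfolding \<theta>_def by (simp add: powr_powr powr_realpow[symmetric] mult.commute)
    ultimately show ?thesis using r by (simp add: field_simps)
  qed
  have "measure srw {\<omega>. m \<le> exit_time \<Gamma> x \<omega>} \<le> C * \<theta> ^ m" for m x
  proof (cases m)
    case 0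
    have "\<theta> * r \<le> 1" using th r by (simp add: mult_le_one)
    hence "1 \<le> C" using th r unfolding C_def by (simp add: le_divide_eq)
    then show ?thesis using 0 by (simp add: order_trans[OF S.prob_le_1])
  next
    case (Suc m')
    have "measure srw {\<omega>. m \<le> exit_time \<Gamma> x \<omega>} \<le> pst \<Gamma> m' x"
      unfolding pst_def Suc using exit_tail_sub by (intro S.finite_measure_mono) auto
    also have "\<dots> \<le> r ^ (m' div L)" using pst_bound[OF fin] by (simp add: r_def L_def)
    also have "\<dots> \<le> \<theta> ^ m' / r" by (rule key)
    also have "\<dots> = C * \<theta> ^ m" using th r by (simp add: C_def Suc)
    finally show ?thesis .
  qed
  thus ?thesis using th C by (intro exI[of _ C] exI[of _ \<theta>]) auto
qed

lemma poly_geom_summable: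
  fixes \<theta> :: real
  assumes th: "0 \<le> \<theta>" "\<theta> < 1"
  shows "summable (\<lambda>n. (real n + 1) ^ K * \<theta> ^ n)"
proof -
  define c where "c = (1 + \<theta>) / 2"
  have c: "\<theta> < c" "c < 1" using th by (auto simp: c_def)
  define g where "g n = ((real n + 2) / (real n + 1)) ^ K" for n
  have "(\<lambda>n. 1 + inverse (real (Suc n))) \<longlonglongrightarrow> 1"
    using LIMSEQ_inverse_real_of_nat_add[of 1] .
  moreover have "1 + inverse (real (Suc n)) = (real n + 2) / (real n + 1)" for n
    by (simp add: field_simps)
  ultimately have "(\<lambda>n. (real n + 2) / (real n + 1)) \<longlonglongrightarrow> 1" by simp
  hence "(\<lambda>n. g n * \<theta>) \<longlonglongrightarrow> 1 ^ K * \<theta>" unfolding g_def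
    by (intro tendsto_intros)
  hence "eventually (\<lambda>n. g n * \<theta> < c) sequentially" using c by (intro order_tendstoD(2)) auto
  then obtain N where N: "\<And>n. n \<ge> N \<Longrightarrow> g n * \<theta> < c" by (auto simp: eventually_sequentially)
  show ?thesis
  proof (rule summable_ratio_test[OF c(2)])
    fix n assume "n \<ge> N"
    hence gn: "g n * \<theta> \<le> c" using N by force
    have "norm ((real (Suc n) + 1) ^ K * \<theta> ^ Suc n) = (real n + 2) ^ K * \<theta> ^ Suc n"
      using th by (simp add: add_ac)
    also have "\<dots> = (g n * \<theta>) * ((real n + 1) ^ K * \<theta> ^ n)"
      by (simp add: g_def power_divide field_simps)
    also have "\<dots> \<le> c * ((real n + 1) ^ K * \<theta> ^ n)"
      using gn th by (intro mult_right_mono) auto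
    also have "\<dots> = c * norm ((real n + 1) ^ K * \<theta> ^ n)" using th by simp
    finally show "norm ((real (Suc n) + 1) ^ K * \<theta> ^ Suc n) \<le> c * norm ((real n + 1) ^ K * \<theta> ^ n)" .
  qed
qed

lemma texp_bound:
  assumes u: "u \<in> unit_steps"
  shows "\<bar>texp (rvec u) v\<bar> \<le> 1 / fact (length v)"
proof -
  have "\<bar>\<Prod>j<length v. rvec u $ (v ! j)\<bar> \<le> 1"
    unfolding abs_prod using unit_steps_coord[OF u]
    by (intro prod_le_1) (auto simp: rvec_def, metis of_int_1 of_int_abs of_int_le_iff)
  thus ?thesis by (simp add: texp_def tpow_def divide_right_mono)
qed

lemma path_sig_Cons: "path_sig (u # us) = tmul (texp (rvec u)) (path_sig us)"
  by (simp add: path_sig_def)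

lemma path_sig_Nil: "path_sig [] = tone"
  by (simp add: path_sig_def)

lemma path_sig_bound:
  "set us \<subseteq> unit_steps \<Longrightarrow> \<bar>path_sig us w\<bar> \<le> (real (length us) + 1) ^ length w"
proof (induction us arbitrary: w)
  case Nil then show ?case by (simp add: path_sig_Nil tone_def)
next
  case (Cons u us)
  define n where "n = length w"
  define m where "m = real (length us)"
  have u: "u \<in> unit_steps" and us: "set us \<subseteq> unit_steps" using Cons.prems by auto
  have "\<bar>path_sig (u # us) w\<bar> = \<bar>\<Sum>k\<le>n. texp (rvec u) (take k w) * path_sig us (drop k w)\<bar>"
    by (simp add: path_sig_Cons tmul_def n_def)
  also have "\<dots> \<le> (\<Sum>k\<le>n. \<bar>texp (rvec u) (take k w)\<bar> * \<bar>path_sig us (drop k w)\<bar>)"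
    by (rule order_trans[OF sum_abs]) (simp add: abs_mult)
  also have "\<dots> \<le> (\<Sum>k\<le>n. (1 / fact k) * (m + 1) ^ (n - k))"
  proof (intro sum_mono mult_mono)
    fix k assume "k \<in> {..n}"
    hence "length (take k w) = k" "length (drop k w) = n - k" by (auto simp: n_def)
    thus "\<bar>texp (rvec u) (take k w)\<bar> \<le> 1 / fact k" "\<bar>path_sig us (drop k w)\<bar> \<le> (m + 1) ^ (n - k)"
      using texp_bound[OF u, of "take k w"] Cons.IH[OF us, of "drop k w"] by (auto simp: m_def)
  qed auto
  also have "\<dots> \<le> (\<Sum>k\<le>n. of_nat (n choose k) * 1 ^ k * (m + 1) ^ (n - k))"
  proof (intro sum_mono mult_right_mono)
    fix k assume "k \<in> {..n}"
    hence "1 \<le> n choose k" by (simp add: Suc_leI)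
    hence h1: "(1::real) \<le> of_nat (n choose k)" using of_nat_le_iff[of 1 "n choose k", where 'a=real] by simp
    have h2: "1 / fact k \<le> (1::real)" by simp
    show "1 / fact k \<le> of_nat (n choose k) * (1::real) ^ k"
      using h1 h2 by (simp only: power_one mult_1_right)
  qed (auto simp: m_def)
  also have "\<dots> = (1 + (m + 1)) ^ n" by (rule binomial_ring[symmetric])
  also have "\<dots> = (real (length (u # us)) + 1) ^ length w" by (simp add: m_def n_def)
  finally show ?case .
qed

lemma AE_steps: "AE \<omega> in (srw :: (int^'d) stream measure). \<forall>i. \<omega> !! i \<in> unit_steps"
proof -
  have "AE \<omega> in stream_space (UM :: (int^'d) measure). stream_all (\<lambda>x. x \<in> unit_steps) \<omega>"
    by (rule prob_space.AE_stream_all[OF prob_space_measure_pmf])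
       (auto simp: AE_measure_pmf_iff)
  thus ?thesis unfolding srw_def by (simp add: stream_all_def sset_range)
qed

lemma stake_steps: "(\<forall>i. \<omega> !! i \<in> A) \<Longrightarrow> set (stake n \<omega>) \<subseteq> A"
proof (induction n arbitrary: \<omega>)
  case (Suc n)
  have "\<forall>i. stl \<omega> !! i \<in> A" using Suc.prems by (metis snth.simps(2))
  moreover have "shd \<omega> \<in> A" using Suc.prems by (metis snth.simps(1))
  ultimately show ?case using Suc.IH by simp
qed simp

lemma exit_ge_sets[measurable]:
  "{\<omega>. m \<le> exit_time \<Gamma> x \<omega>} \<in> sets (srw :: (int^'d) stream measure)"
proof -
  have "{\<omega>. m \<le> exit_time \<Gamma> x \<omega>} = exit_time \<Gamma> x -` {m..} \<inter> space srw" by auto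
  thus ?thesis using measurable_sets[OF exit_time_meas, of "{m..}" \<Gamma> x] by simp
qed

lemma real_exit_meas[measurable]:
  "(\<lambda>\<omega>. h (exit_time \<Gamma> x \<omega>) :: real) \<in> borel_measurable (srw :: (int^'d) stream measure)"
  by (rule measurable_compose[OF exit_time_meas]) simp

lemma tau_moment:
  fixes \<Gamma> :: "(int^'d) set"
  assumes fin: "finite \<Gamma>"
  shows "(\<integral>\<^sup>+\<omega>. ennreal ((real (exit_time \<Gamma> x \<omega>) + 1) ^ K) \<partial>srw) < \<infinity>"
proof -
  interpret S: prob_space "srw :: (int^'d) stream measure" by (rule prob_space_srw)
  obtain C \<theta> where th: "0 \<le> \<theta>" "\<theta> < 1" and C: "0 \<le> C"
    and tail: "\<And>m. measure srw {\<omega>. m \<le> exit_time \<Gamma> x \<omega>} \<le> C * \<theta> ^ m"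
    using exit_tail[OF fin] by blast
  define A where "A m = {\<omega>. m \<le> exit_time \<Gamma> x \<omega>}" for m
  have A[measurable]: "A m \<in> sets srw" for m unfolding A_def by simp
  have "(\<integral>\<^sup>+\<omega>. ennreal ((real (exit_time \<Gamma> x \<omega>) + 1) ^ K) \<partial>srw)
      \<le> (\<integral>\<^sup>+\<omega>. (\<Sum>m. ennreal ((real m + 1) ^ K) * indicator (A m) \<omega>) \<partial>srw)"
  proof (rule nn_integral_mono)
    fix \<omega>
    define t where "t = exit_time \<Gamma> x \<omega>"
    have "(\<Sum>m\<in>{t}. ennreal ((real m + 1) ^ K) * indicator (A m) \<omega>)
        \<le> (\<Sum>m. ennreal ((real m + 1) ^ K) * indicator (A m) \<omega>)"
      by (rule sum_le_suminf) auto
    thus "ennreal ((real (exit_time \<Gamma> x \<omega>) + 1) ^ K) \<le> (\<Sum>m. ennreal ((real m + 1) ^ K) * indicator (A m) \<omega>)"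
      by (simp add: t_def A_def)
  qed
  also have "\<dots> = (\<Sum>m. \<integral>\<^sup>+\<omega>. ennreal ((real m + 1) ^ K) * indicator (A m) \<omega> \<partial>srw)"
    by (rule nn_integral_suminf) simp
  also have "\<dots> = (\<Sum>m. ennreal ((real m + 1) ^ K) * emeasure srw (A m))"
    by (simp add: nn_integral_cmult_indicator)
  also have "\<dots> \<le> (\<Sum>m. ennreal (C * ((real m + 1) ^ K * \<theta> ^ m)))"
  proof (intro suminf_le summableI)
    fix m
    have "emeasure srw (A m) \<le> ennreal (C * \<theta> ^ m)"
      using tail[of m] by (simp add: S.emeasure_eq_measure A_def ennreal_leI)
    hence "ennreal ((real m + 1) ^ K) * emeasure srw (A m) \<le> ennreal ((real m + 1) ^ K) * ennreal (C * \<theta> ^ m)"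
      by (rule mult_left_mono) simp
    also have "\<dots> = ennreal (C * ((real m + 1) ^ K * \<theta> ^ m))"
      using C th by (simp add: ennreal_mult'[symmetric] mult_ac)
    finally show "ennreal ((real m + 1) ^ K) * emeasure srw (A m) \<le> ennreal (C * ((real m + 1) ^ K * \<theta> ^ m))" .
  qed
  also have "\<dots> < \<infinity>"
    using ennreal_suminf_neq_top[OF summable_mult[OF poly_geom_summable[OF th, of K]]] C th
    by (simp add: less_top)
  finally show ?thesis .
qed

lemma sig_integrable:
  fixes \<Gamma> :: "(int^'d) set"
  assumes fin: "finite \<Gamma>"
  shows "integrable srw (\<lambda>\<omega>. path_sig (stake (exit_time \<Gamma> x \<omega>) \<omega>) w)"
proof (rule Bochner_Integration.integrable_bound[where f="\<lambda>\<omega>. (real (exit_time \<Gamma> x \<omega>) + 1) ^ length w"])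
  show "integrable srw (\<lambda>\<omega>. (real (exit_time \<Gamma> x \<omega>) + 1) ^ length w)"
    unfolding integrable_iff_bounded using tau_moment[OF fin, of x "length w"] by simp
  show "AE \<omega> in srw. norm (path_sig (stake (exit_time \<Gamma> x \<omega>) \<omega>) w) \<le> norm ((real (exit_time \<Gamma> x \<omega>) + 1) ^ length w)"
    using AE_steps
  proof eventually_elim
    case (elim \<omega>)
    then show ?case using path_sig_bound[OF stake_steps[OF elim], of "exit_time \<Gamma> x \<omega>" w] by simp
  qed
qed simp

lemma never_exit_null:
  fixes \<Gamma> :: "(int^'d) set"
  assumes fin: "finite \<Gamma>"
  shows "AE X in srw. \<exists>k. walk y X k \<notin> \<Gamma>"
proof -
  interpret S: prob_space "srw :: (int^'d) stream measure" by (rule prob_space_srw)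
  define N where "N = {X::(int^'d) stream. \<forall>k. walk y X k \<in> \<Gamma>}"
  have N: "N \<in> sets srw"
  proof -
    have m: "(\<lambda>X. walk y X k) -` \<Gamma> \<in> sets srw" for k
      using measurable_sets[OF walk_meas, of \<Gamma> y k] by simp
    have "N = (\<Inter>k. (\<lambda>X. walk y X k) -` \<Gamma>)" by (auto simp: N_def)
    also have "\<dots> \<in> sets srw" by (intro sets.countable_INT) (use m in auto)
    finally show ?thesis .
  qed
  have le: "measure srw N \<le> (1 - qq \<Gamma>) ^ j" for j
  proof -
    have "measure srw N \<le> pst \<Gamma> (j * (card \<Gamma> + 1)) y"
      unfolding pst_def by (intro S.finite_measure_mono) (auto simp: N_def stay_def)
    also have "\<dots> \<le> (1 - qq \<Gamma>) ^ j" by (rule pst_geom[OF fin])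
    finally show ?thesis .
  qed
  have "measure srw N = 0"
  proof (rule ccontr)
    assume "measure srw N \<noteq> 0"
    hence "0 < measure srw N" by (simp add: zero_less_measure_iff)
    then obtain j where "(1 - qq \<Gamma>) ^ j < measure srw N"
      using real_arch_pow_inv[of "measure srw N" "1 - qq \<Gamma>"] qq_bounds[of \<Gamma>] by auto
    with le[of j] show False by simp
  qed
  hence "emeasure srw N = 0" by (simp add: S.emeasure_eq_measure)
  thus ?thesis by (intro AE_I[OF _ _ N]) (auto simp: N_def)
qed

lemma exit_Stream:
  assumes x: "x \<in> \<Gamma>" and k: "walk (x + e) X k \<notin> \<Gamma>"
  shows "exit_time \<Gamma> x (e ## X) = Suc (exit_time \<Gamma> (x + e) X)"
proof -
  have "(LEAST k. walk x (e ## X) k \<notin> \<Gamma>) = Suc (LEAST m. walk x (e ## X) (Suc m) \<notin> \<Gamma>)"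
    by (rule Least_Suc[where n="Suc k"]) (use x k in simp_all)
  thus ?thesis unfolding exit_time_def by simp
qed

lemma Stream_meas[measurable]: "(\<lambda>X. e ## X) \<in> measurable (srw :: (int^'d) stream measure) srw"
  unfolding srw_def by measurable

lemma Phi_rec:
  fixes \<Gamma> :: "(int^'d) set"
  assumes fin: "finite \<Gamma>" and x: "x \<in> \<Gamma>"
  shows "Phi \<Gamma> x w = (\<Sum>e\<in>unit_steps. tmul (texp (rvec e)) (Phi \<Gamma> (x + e)) w) / card (unit_steps :: (int^'d) set)"
proof -
  define F where "F = (\<lambda>y v X. path_sig (stake (exit_time \<Gamma> y X) X) v)"
  have Fint: "integrable srw (F y v)" for y v unfolding F_def by (rule sig_integrable[OF fin])
  have Fm[measurable]: "F y v \<in> borel_measurable srw" for y v unfolding F_def by (rule sig_meas)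
  have "Phi \<Gamma> x w = integral\<^sup>L srw (F x w)" by (simp add: Phi_def F_def)
  also have "\<dots> = (\<Sum>e\<in>unit_steps. integral\<^sup>L srw (\<lambda>X. F x w (e ## X))) / card (unit_steps :: (int^'d) set)"
    by (rule srw_integral_decomp[OF Fint])
  also have "\<dots> = (\<Sum>e\<in>unit_steps. tmul (texp (rvec e)) (Phi \<Gamma> (x + e)) w) / card (unit_steps :: (int^'d) set)"
  proof (intro arg_cong2[where f="(/)"] sum.cong refl)
    fix e :: "int^'d"
    have "integral\<^sup>L srw (\<lambda>X. F x w (e ## X)) =
        integral\<^sup>L srw (\<lambda>X. \<Sum>k\<le>length w. texp (rvec e) (take k w) * F (x + e) (drop k w) X)"
    proof (rule integral_cong_AE)
      show "(\<lambda>X. F x w (e ## X)) \<in> borel_measurable srw" by measurable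
      show "(\<lambda>X. \<Sum>k\<le>length w. texp (rvec e) (take k w) * F (x + e) (drop k w) X) \<in> borel_measurable srw"
        by measurable
      show "AE X in srw. F x w (e ## X) = (\<Sum>k\<le>length w. texp (rvec e) (take k w) * F (x + e) (drop k w) X)"
        using never_exit_null[OF fin, of "x + e"]
      proof eventually_elim
        case (elim X)
        then obtain k where "walk (x + e) X k \<notin> \<Gamma>" by auto
        from exit_Stream[OF x this] show ?case
          by (simp add: F_def path_sig_Cons tmul_def)
      qed
    qed
    also have "\<dots> = (\<Sum>k\<le>length w. texp (rvec e) (take k w) * integral\<^sup>L srw (F (x + e) (drop k w)))"
      using Fint by (simp add: integral_sum)
    also have "\<dots> = tmul (texp (rvec e)) (Phi \<Gamma> (x + e)) w"
      by (simp add: tmul_def Phi_def F_def)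
    finally show "integral\<^sup>L srw (\<lambda>X. F x w (e ## X)) = tmul (texp (rvec e)) (Phi \<Gamma> (x + e)) w" .
  qed
  finally show ?thesis .
qed

lemma path_sig_empty: "path_sig us [] = 1"
  by (induction us) (simp_all add: path_sig_Nil path_sig_Cons tone_def tmul_def texp_def tpow_def)

lemma Phi_empty: "Phi \<Gamma> (x::int^'d) [] = 1"
proof -
  interpret S: prob_space "srw :: (int^'d) stream measure" by (rule prob_space_srw)
  show ?thesis using S.prob_space by (simp add: Phi_def path_sig_empty)
qed

lemma Phi_out:
  assumes "(x::int^'d) \<notin> \<Gamma>"
  shows "Phi \<Gamma> x = tone"
proof -
  interpret S: prob_space "srw :: (int^'d) stream measure" by (rule prob_space_srw)
  have "exit_time \<Gamma> x \<omega> = 0" for \<omega> unfolding exit_time_def using assms by simp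
  thus ?thesis using S.prob_space by (simp add: Phi_def path_sig_Nil)
qed

lemma rho_tone: "n \<noteq> 0 \<Longrightarrow> rho n tone = tzero"
  by (auto simp: rho_def tone_def tzero_def)

lemma sum_unit_coord: "(\<Sum>e\<in>(unit_steps::(int^'d) set). rvec e $ i) = 0"
proof -
  have "(\<Sum>e\<in>(unit_steps::(int^'d) set). rvec e $ i) = (\<Sum>e\<in>(unit_steps::(int^'d) set). rvec (- e) $ i)"
    by (rule sum.reindex_bij_witness[where i=uminus and j=uminus]) (auto simp: unit_steps_uminus)
  also have "\<dots> = - (\<Sum>e\<in>(unit_steps::(int^'d) set). rvec e $ i)"
    by (simp add: rvec_def sum_negf)
  finally show ?thesis by simp
qed

lemma harmonic_nonpos:
  fixes f :: "int^'d \<Rightarrow> real" and \<Gamma> :: "(int^'d) set"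
  assumes fin: "finite \<Gamma>" and out: "\<And>y. y \<notin> \<Gamma> \<Longrightarrow> f y = 0"
    and harm: "\<And>y. y \<in> \<Gamma> \<Longrightarrow> f y = (\<Sum>e\<in>unit_steps. f (y + e)) / card (unit_steps::(int^'d) set)"
  shows "f y \<le> 0"
proof (rule ccontr)
  assume "\<not> f y \<le> 0"
  hence fy: "f y > 0" by simp
  hence yG: "y \<in> \<Gamma>" using out by force
  define M where "M = Max (f ` \<Gamma>)"
  have fM: "f z \<le> M" for z
  proof (cases "z \<in> \<Gamma>")
    case True thus ?thesis unfolding M_def using fin by simp
  next
    case False
    have "f y \<le> M" unfolding M_def using fin yG by simp
    thus ?thesis using False out fy by simp
  qed
  have Mpos: "M > 0" using fM[of y] fy by simp
  have "M \<in> f ` \<Gamma>" unfolding M_def using fin yG by (intro Max_in) auto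
  then obtain y0 where y0: "y0 \<in> \<Gamma>" "f y0 = M" by auto
  define N where "N = real (card (unit_steps::(int^'d) set))"
  have N: "N \<ge> 2" unfolding N_def by (rule card_unit_pos)
  have step: "f (z + e) = M" if z: "z \<in> \<Gamma>" "f z = M" and e: "e \<in> unit_steps" for z e
  proof -
    have "(\<Sum>e\<in>unit_steps. f (z + e)) = N * M" using harm[OF z(1)] z(2) N by (simp add: N_def field_simps)
    hence "(\<Sum>e\<in>unit_steps. M - f (z + e)) = 0" by (simp add: sum_subtractf N_def)
    hence "\<forall>e\<in>unit_steps. M - f (z + e) = 0"
      by (subst (asm) sum_nonneg_eq_0_iff) (auto simp: fM)
    thus ?thesis using e by simp
  qed
  obtain i :: 'd where True by simp
  have line: "y0 + of_nat s *s axis i 1 \<in> \<Gamma> \<and> f (y0 + of_nat s *s axis i 1) = M" for s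
  proof (induction s)
    case 0 thus ?case using y0 by (simp add: vec_eq_iff)
  next
    case (Suc s)
    have eq: "y0 + of_nat (Suc s) *s axis i 1 = (y0 + of_nat s *s axis i 1) + axis i 1"
      by (simp add: vec_eq_iff algebra_simps)
    have "f (y0 + of_nat (Suc s) *s axis i 1) = M"
      unfolding eq using Suc step axis_unit by blast
    moreover have "y0 + of_nat (Suc s) *s axis i 1 \<in> \<Gamma>"
      using calculation Mpos out by force
    ultimately show ?case by simp
  qed
  from exit_line[OF fin, of y0 i] line show False by auto
qed

lemma Phi_one:
  fixes \<Gamma> :: "(int^'d) set"
  assumes fin: "finite \<Gamma>"
  shows "Phi \<Gamma> x [i] = 0"
proof -
  define f where "f y = Phi \<Gamma> y [i]" for y
  have out: "f y = 0" if "y \<notin> \<Gamma>" for y using Phi_out[OF that] by (simp add: f_def tone_def)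
  have harm: "f y = (\<Sum>e\<in>unit_steps. f (y + e)) / card (unit_steps::(int^'d) set)" if y: "y \<in> \<Gamma>" for y
  proof -
    have "f y = (\<Sum>e\<in>unit_steps. f (y + e) + rvec e $ i) / card (unit_steps::(int^'d) set)"
      unfolding f_def Phi_rec[OF fin y]
      by (simp add: tmul_def texp_def tpow_def Phi_empty)
    also have "\<dots> = (\<Sum>e\<in>unit_steps. f (y + e)) / card (unit_steps::(int^'d) set)"
      by (simp add: sum.distrib sum_unit_coord)
    finally show ?thesis .
  qed
  have "f x \<le> 0" by (rule harmonic_nonpos[OF fin out harm])
  moreover have "- f x \<le> 0"
    by (rule harmonic_nonpos[OF fin, where f="\<lambda>y. - f y"]) (auto simp: out harm sum_negf)
  ultimately show ?thesis by (simp add: f_def)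
qed

lemma tmul_tpow_rho:
  assumes i: "i \<le> n"
  shows "tmul (tscale (1 / fact i) (tpow v i)) (rho (n - i) b) w =
         (if length w = n then texp v (take i w) * b (drop i w) else 0)"
proof -
  have hterm: "tscale (1 / fact i) (tpow v i) (take k w) * rho (n - i) b (drop k w) =
      (if k = i then (if length w = n then texp v (take i w) * b (drop i w) else 0) else 0)"
    if k: "k \<in> {..length w}" for k
  proof -
    have lk: "length (take k w) = k" "length (drop k w) = length w - k" using k by auto
    show ?thesis
    proof (cases "k = i")
      case True
      then show ?thesis using lk i k by (auto simp: tscale_def tpow_def rho_def texp_def)
    next
      case False
      then show ?thesis using lk by (simp add: tscale_def tpow_def)
    qed
  qed
  have "tmul (tscale (1 / fact i) (tpow v i)) (rho (n - i) b) w =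
      (\<Sum>k\<le>length w. (if k = i then (if length w = n then texp v (take i w) * b (drop i w) else 0) else 0))"
    unfolding tmul_def by (rule sum.cong[OF refl hterm])
  also have "\<dots> = (if length w = n then texp v (take i w) * b (drop i w) else 0)"
    using i by (auto simp: sum.delta)
  finally show ?thesis .
qed

lemma texp_empty: "texp v [] = 1" by (simp add: texp_def tpow_def)

lemma lap_part:
  fixes \<Gamma> :: "(int^'d) set"
  assumes fin: "finite \<Gamma>" and x: "x \<in> \<Gamma>" and n: "n \<ge> 2"
  shows "dlap (\<lambda>y. rho n (Phi \<Gamma> y) w) x =
            - (\<Sum>e\<in>unit_steps. (1 / (2 * real CARD('d))) *
                 (\<Sum>i=1..n. tmul (tscale (1 / fact i) (tpow (rvec e) i))
                                  (rho (n - i) (Phi \<Gamma> (x + e))) w))"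
proof (cases "length w = n")
  case False
  have z: "(\<Sum>i=1..n. tmul (tscale (1 / fact i) (tpow (rvec e) i)) (rho (n - i) (Phi \<Gamma> (x + e))) w) = 0" for e
    by (rule sum.neutral) (use False in \<open>auto simp: tmul_tpow_rho\<close>)
  show ?thesis unfolding dlap_def z using False by (simp add: rho_def)
next
  case True
  define c where "c = 1 / (2 * real CARD('d))"
  have card: "real (card (unit_steps :: (int^'d) set)) = 2 * real CARD('d)"
    using unit_steps_card[where 'd='d] by simp
  have inner: "(\<Sum>i=1..n. tmul (tscale (1 / fact i) (tpow (rvec e) i)) (rho (n - i) (Phi \<Gamma> (x + e))) w)
      = tmul (texp (rvec e)) (Phi \<Gamma> (x + e)) w - Phi \<Gamma> (x + e) w" for e
  proof -
    have "(\<Sum>i=1..n. tmul (tscale (1 / fact i) (tpow (rvec e) i)) (rho (n - i) (Phi \<Gamma> (x + e))) w)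
        = (\<Sum>i=Suc 0..n. texp (rvec e) (take i w) * Phi \<Gamma> (x + e) (drop i w))"
      using True by (intro sum.cong) (auto simp: tmul_tpow_rho)
    also have "\<dots> = (\<Sum>i=0..n. texp (rvec e) (take i w) * Phi \<Gamma> (x + e) (drop i w)) - Phi \<Gamma> (x + e) w"
      by (subst sum.atLeast_Suc_atMost[of 0 n]) (auto simp: texp_empty)
    also have "\<dots> = tmul (texp (rvec e)) (Phi \<Gamma> (x + e)) w - Phi \<Gamma> (x + e) w"
      using True by (simp add: tmul_def atLeast0AtMost)
    finally show ?thesis .
  qed
  have rec: "Phi \<Gamma> x w = c * (\<Sum>e\<in>unit_steps. tmul (texp (rvec e)) (Phi \<Gamma> (x + e)) w)"
    using Phi_rec[OF fin x, of w] card by (simp add: c_def)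
  have "dlap (\<lambda>y. rho n (Phi \<Gamma> y) w) x = c * (\<Sum>e\<in>unit_steps. Phi \<Gamma> (x + e) w) - Phi \<Gamma> x w"
    using True by (simp add: dlap_def rho_def c_def)
  also have "\<dots> = - (\<Sum>e\<in>unit_steps. c * (tmul (texp (rvec e)) (Phi \<Gamma> (x + e)) w - Phi \<Gamma> (x + e) w))"
    unfolding rec by (simp add: sum_subtractf sum_distrib_left[symmetric] algebra_simps)
  also have "\<dots> = - (\<Sum>e\<in>unit_steps. c * (\<Sum>i=1..n. tmul (tscale (1 / fact i) (tpow (rvec e) i))
                                  (rho (n - i) (Phi \<Gamma> (x + e))) w))"
    unfolding inner ..
  finally show ?thesis by (simp add: c_def)
qed

theorem mainTheorem17:
  fixes \<Gamma> :: "(int^'d) set"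
  assumes "finite \<Gamma>"
  shows "(\<forall>x\<in>\<Gamma>. Phi \<Gamma> x =
            (\<lambda>w. \<Sum>e\<in>unit_steps. (1 / (2 * real CARD('d))) *
                    tmul (texp (rvec e)) (Phi \<Gamma> (x + e)) w))
       \<and> (\<forall>n\<ge>2. \<forall>x\<in>\<Gamma>. \<forall>w.
            dlap (\<lambda>y. rho n (Phi \<Gamma> y) w) x =
            - (\<Sum>e\<in>unit_steps. (1 / (2 * real CARD('d))) *
                 (\<Sum>i=1..n. tmul (tscale (1 / fact i) (tpow (rvec e) i))
                                  (rho (n - i) (Phi \<Gamma> (x + e))) w)))
       \<and> (\<forall>n\<ge>2. \<forall>x\<in>lattice_boundary \<Gamma>. rho n (Phi \<Gamma> x) = tzero)
       \<and> (\<forall>x\<in>lattice_closure \<Gamma>. rho 0 (Phi \<Gamma> x) = tone \<and> rho 1 (Phi \<Gamma> x) = tzero)"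
proof (intro conjI ballI allI impI)
  fix x assume x: "x \<in> \<Gamma>"
  have card: "real (card (unit_steps :: (int^'d) set)) = 2 * real CARD('d)"
    using unit_steps_card[where 'd='d] by simp
  show "Phi \<Gamma> x = (\<lambda>w. \<Sum>e\<in>unit_steps. (1 / (2 * real CARD('d))) * tmul (texp (rvec e)) (Phi \<Gamma> (x + e)) w)"
  proof
    fix w show "Phi \<Gamma> x w = (\<Sum>e\<in>unit_steps. (1 / (2 * real CARD('d))) * tmul (texp (rvec e)) (Phi \<Gamma> (x + e)) w)"
      using Phi_rec[OF assms x, of w] card by (simp add: sum_divide_distrib)
  qed
next
  fix n :: nat and x w assume "n \<ge> 2" "x \<in> \<Gamma>"
  then show "dlap (\<lambda>y. rho n (Phi \<Gamma> y) w) x =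
            - (\<Sum>e\<in>unit_steps. (1 / (2 * real CARD('d))) *
                 (\<Sum>i=1..n. tmul (tscale (1 / fact i) (tpow (rvec e) i))
                                  (rho (n - i) (Phi \<Gamma> (x + e))) w))"
    using lap_part[OF assms] by blast
next
  fix n :: nat and x assume "n \<ge> 2" "x \<in> lattice_boundary \<Gamma>"
  then show "rho n (Phi \<Gamma> x) = tzero"
    by (simp add: lattice_boundary_def Phi_out rho_tone)
next
  fix x assume "x \<in> lattice_closure \<Gamma>"
  show "rho 0 (Phi \<Gamma> x) = tone"
    by (auto simp: rho_def tone_def Phi_empty)
  show "rho 1 (Phi \<Gamma> x) = tzero"
  proof
    fix w :: "'d list"
    show "rho 1 (Phi \<Gamma> x) w = tzero w"
      by (cases w) (auto simp: rho_def tzero_def Phi_one[OF assms])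
  qed
qed

end
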